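(* Let $\sigma\in\mathbb R^{d}$ with $\sigma\ne0$, $\bar r_X\ge0$, and $0\le\underline c\le\bar c\le1$ with $\underline c<1$. For $r_X,c\in\mathbb R^d$ with $r_X'c\neq-1$ let $z_X(r_X,c)=\dfrac{r_X'\sigma\sqrt{1-\|c\|^2}}{1+r_X'c}$. Then $$\sup\{|z_X(r_X,c)|:\|r_X\|\le\bar r_X,\ \|c\|\in[\underline c,\bar c],\ \|c\|\ne1,\ r_X'c\ne-1\}=\bar z_X(\bar r_X,\underline c,\bar c),$$ where, with $m=\max\{\min\{\bar r_X,\bar c\},\underline c\}$, $\bar z_X(\bar r_X,\underline c,\bar c)=\dfrac{\bar r_X\|\sigma\|\sqrt{1-m^2}}{1-\bar r_Xm}$ if $\bar r_X\bar c<1$ and $\bar z_X(\bar r_X,\underline c,\bar c)=+\infty$ if $\bar r_X\bar c\ge1$.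
   Context: $\|\cdot\|$ is the Euclidean norm. *)

theory Defs
  imports "HOL-Analysis.Analysis"
begin

definition zX :: "real^'d \<Rightarrow> real^'d \<Rightarrow> real^'d \<Rightarrow> real" where
  "zX \<sigma> r c = (r \<bullet> \<sigma>) * sqrt (1 - (norm c)^2) / (1 + r \<bullet> c)"

definition zbarX :: "real^'d \<Rightarrow> real \<Rightarrow> real \<Rightarrow> real \<Rightarrow> ereal" where
  "zbarX \<sigma> rbar clo chi =
     (let m = max (min rbar chi) clo in
      if rbar * chi < 1 then ereal (rbar * norm \<sigma> * sqrt (1 - m^2) / (1 - rbar * m))
      else \<infinity>)"

end

theory Submission
  imports Defs
begin

lemma key_poly:
  fixes R t m :: real
  shows "(1-m^2)*(1-R*t)^2 - (1-t^2)*(1-R*m)^2 = (1+R^2-2*R*m)*(t-m)^2 - 2*(t-m)*(R-m)*(1-R*m)"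
  by algebra

lemma g_le:
  fixes R t m :: real
  assumes "0 \<le> t" "t \<le> 1" "m \<le> 1" "0 \<le> m" "R*t < 1" "R*m < 1" "(t-m)*(R-m) \<le> 0" "R \<ge> 0"
  shows "sqrt (1-t^2)/(1-R*t) \<le> sqrt (1-m^2)/(1-R*m)"
proof -
  have c: "1+R^2-2*R*m \<ge> 0"
  proof -
    have "0 \<le> (R-m)^2 + (1-m^2)" using assms(3,4) by (simp add: power_le_one)
    thus ?thesis by (simp add: power2_eq_square algebra_simps)
  qed
  have n: "(t-m)*(R-m)*(1-R*m) \<le> 0" using assms(6,7) by (simp add: mult_nonpos_nonneg)
  have "0 \<le> (1+R^2-2*R*m)*(t-m)^2" using c by simp
  hence D: "(1-t^2)*(1-R*m)^2 \<le> (1-m^2)*(1-R*t)^2"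
    using key_poly[of m R t] n by linarith
  have "sqrt (1-t^2)*(1-R*m) = sqrt ((1-t^2)*(1-R*m)^2)" using assms(6)
    by (simp add: real_sqrt_mult)
  also have "\<dots> \<le> sqrt ((1-m^2)*(1-R*t)^2)" using D real_sqrt_le_mono by blast
  also have "\<dots> = sqrt (1-m^2)*(1-R*t)" using assms(5) by (simp add: real_sqrt_mult)
  finally show ?thesis using assms(5,6) by (simp add: divide_simps mult.commute)
qed


lemma mono_a:
  fixes a R t :: real
  assumes "0 \<le> a" "a \<le> R" "0 \<le> t" "R*t < 1"
  shows "a/(1-a*t) \<le> R/(1-R*t)"
proof -
  have "a*t \<le> R*t" using assms by (simp add: mult_right_mono)
  hence p: "1 - a*t > 0" using assms by linarith
  have "a*(1-R*t) \<le> R*(1-a*t)" using assms by (simp add: algebra_simps)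
  thus ?thesis using p assms(4) by (simp add: divide_simps)
qed

theorem mainTheorem14:
  fixes \<sigma> :: "real^'d" and rbar clo chi :: real
  assumes "\<sigma> \<noteq> 0" and "rbar \<ge> 0" and "0 \<le> clo" and "clo \<le> chi" and "chi \<le> 1" and "clo < 1"
  shows "(SUP rc \<in> {(r, c). norm r \<le> rbar \<and> clo \<le> norm c \<and> norm c \<le> chi \<and> norm c \<noteq> 1
                        \<and> r \<bullet> c \<noteq> -1}.
            ereal \<bar>zX \<sigma> (fst rc) (snd rc)\<bar>) = zbarX \<sigma> rbar clo chi"
proof -
  define S :: "((real^'d) \<times> (real^'d)) set" where "S = {(r, c). norm r \<le> rbar \<and> clo \<le> norm c \<and> norm c \<le> chi \<and> norm c \<noteq> 1
                        \<and> r \<bullet> c \<noteq> -1}"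
  define u where "u = (1/norm \<sigma>) *\<^sub>R \<sigma>"
  have ns: "norm \<sigma> > 0" using assms(1) by simp
  have nu: "norm u = 1" unfolding u_def using ns by simp
  have uu: "u \<bullet> u = 1" using nu by (simp add: norm_eq_1)
  have us: "u \<bullet> \<sigma> = norm \<sigma>" unfolding u_def using ns
    by (simp add: power2_norm_eq_inner[symmetric] power2_eq_square)
  have wit: "zX \<sigma> (s *\<^sub>R u) (-(t *\<^sub>R u)) = s * norm \<sigma> * sqrt (1 - t^2)/(1 - s*t)"
    if "0 \<le> t" for s t :: real
    unfolding zX_def using that nu uu us by (simp add: algebra_simps)
  have memb: "(s *\<^sub>R u, -(t *\<^sub>R u)) \<in> S"
    if "0 \<le> s" "s \<le> rbar" "clo \<le> t" "t \<le> chi" "t \<noteq> 1" "s*t \<noteq> 1" for s t :: real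
  proof -
    have "0 \<le> t" using that assms(3) by linarith
    moreover have "(s *\<^sub>R u) \<bullet> (-(t *\<^sub>R u)) = -(s*t)" using uu by simp
    ultimately show ?thesis unfolding S_def using that nu by auto
  qed
  show ?thesis
  proof (cases "rbar*chi < 1")
    case True
    define m where "m = max (min rbar chi) clo"
    define V where "V = rbar*norm \<sigma>* sqrt(1-m^2)/(1-rbar*m)"
    have zb: "zbarX \<sigma> rbar clo chi = ereal V"
      unfolding zbarX_def m_def V_def Let_def using True by simp
    have m1: "clo \<le> m" "m \<le> chi" "0 \<le> m" "m \<le> 1"
      unfolding m_def using assms by auto
    have m2: "rbar*m < 1"
    proof -
      have "rbar*m \<le> rbar*chi" using m1 assms(2) by (simp add: mult_left_mono)
      thus ?thesis using True by linarith
    qed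
    have m3: "m \<noteq> 1"
    proof
      assume "m = 1"
      hence "rbar < 1" using m2 by simp
      thus False using \<open>m = 1\<close> assms(6) unfolding m_def by (auto simp: max_def min_def split: if_splits)
    qed
    have ub: "\<bar>zX \<sigma> r c\<bar> \<le> V" if rc: "(r,c) \<in> S" for r c
    proof -
      define a where "a = norm r"
      define t where "t = norm c"
      have h: "a \<le> rbar" "clo \<le> t" "t \<le> chi" "0 \<le> a" "0 \<le> t"
        using rc unfolding S_def a_def t_def by auto
      have at: "a*t \<le> rbar*chi" using h assms by (simp add: mult_mono)
      have rt: "rbar*t \<le> rbar*chi" using h assms by (simp add: mult_left_mono)
      have cs: "\<bar>r \<bullet> c\<bar> \<le> a*t" unfolding a_def t_def by (rule Cauchy_Schwarz_ineq2)
      have cs2: "\<bar>r \<bullet> \<sigma>\<bar> \<le> a*norm \<sigma>" unfolding a_def by (rule Cauchy_Schwarz_ineq2)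
      have den: "1 + r \<bullet> c \<ge> 1 - a*t" "1 - a*t > 0" using cs at True by linarith+
      have sq: "sqrt (1 - t^2) \<ge> 0" using h assms by (simp add: power_le_one)
      have "\<bar>zX \<sigma> r c\<bar> = \<bar>r \<bullet> \<sigma>\<bar> * sqrt (1 - t^2) / (1 + r \<bullet> c)"
        unfolding zX_def t_def[symmetric] using den sq by (simp add: abs_mult abs_divide)
      also have "\<dots> \<le> (a*norm \<sigma>) * sqrt (1 - t^2) / (1 - a*t)"
        by (rule frac_le) (use cs2 sq den in \<open>auto intro: mult_right_mono\<close>)
      also have "\<dots> = norm \<sigma> * sqrt (1 - t^2) * (a / (1 - a*t))" by simp
      also have "\<dots> \<le> norm \<sigma> * sqrt (1 - t^2) * (rbar / (1 - rbar*t))"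
        apply (rule mult_left_mono)
        using mono_a[of a rbar t] h rt True sq by auto
      also have "\<dots> = rbar * norm \<sigma> * (sqrt (1 - t^2) / (1 - rbar*t))" by simp
      also have "\<dots> \<le> rbar * norm \<sigma> * (sqrt (1 - m^2) / (1 - rbar*m))"
      proof (rule mult_left_mono)
        have l: "m \<le> rbar" if "t < m" using that h unfolding m_def
          by (auto simp: max_def min_def split: if_splits)
        have g: "rbar \<le> m" if "m < t" using that h unfolding m_def
          by (auto simp: max_def min_def split: if_splits)
        have "(t-m)*(rbar-m) \<le> 0"
        proof (cases t m rule: linorder_cases)
          case less thus ?thesis using l by (simp add: mult_nonpos_nonneg)
        next
          case equal thus ?thesis by simp
        next
          case greater thus ?thesis using g by (simp add: mult_nonneg_nonpos)
        qed
        thus "sqrt (1 - t^2) / (1 - rbar*t) \<le> sqrt (1 - m^2) / (1 - rbar*m)"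
          using g_le[of t m rbar] h assms m1 m2 rt True by auto
      qed (use assms ns in simp)
      also have "\<dots> = V" unfolding V_def by simp
      finally show ?thesis .
    qed
    have att: "zX \<sigma> (rbar *\<^sub>R u) (-(m *\<^sub>R u)) = V"
      unfolding V_def using wit[of m rbar] m1 by simp
    have attm: "(rbar *\<^sub>R u, -(m *\<^sub>R u)) \<in> S"
      using memb[of rbar m] m1 m2 m3 assms by auto
    have V0: "V \<ge> 0" unfolding V_def using m1 m2 assms
      by (simp add: power_le_one)
    have "(SUP rc \<in> S. ereal \<bar>zX \<sigma> (fst rc) (snd rc)\<bar>) = ereal V"
    proof (rule antisym)
      show "(SUP rc \<in> S. ereal \<bar>zX \<sigma> (fst rc) (snd rc)\<bar>) \<le> ereal V"
        by (rule SUP_least) (use ub in auto)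
      show "ereal V \<le> (SUP rc \<in> S. ereal \<bar>zX \<sigma> (fst rc) (snd rc)\<bar>)"
        by (rule SUP_upper2[OF attm]) (use att V0 in simp)
    qed
    thus ?thesis using zb unfolding S_def by simp
  next
    case False
    have zb: "zbarX \<sigma> rbar clo chi = \<infinity>"
      unfolding zbarX_def Let_def using False by simp
    have big: "\<exists>rc\<in>S. B < \<bar>zX \<sigma> (fst rc) (snd rc)\<bar>" for B :: real
    proof (cases "chi < 1")
      case True
      have chi0: "chi > 0"
      proof (rule ccontr)
        assume "\<not> chi > 0"
        hence "rbar*chi \<le> 0" using assms(2) by (simp add: mult_nonneg_nonpos)
        thus False using False by linarith
      qed
      have "chi^2 < 1" using True chi0 by (simp add: abs_square_less_1)
      hence sq: "sqrt (1 - chi^2) > 0" by simp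
      define K where "K = norm \<sigma> * sqrt (1 - chi^2) / (2*chi)"
      have K0: "K > 0" unfolding K_def using ns sq chi0 by simp
      define d where "d = min (1/2) (K/(\<bar>B\<bar>+1))"
      have d0: "d > 0" "d \<le> 1/2" "d \<le> K/(\<bar>B\<bar>+1)"
        unfolding d_def using K0 by (auto simp: min_def)
      define s where "s = (1-d)/chi"
      have s0: "0 \<le> s" unfolding s_def using d0 chi0 by simp
      have sR: "s \<le> rbar"
      proof -
        have "s \<le> 1/chi" unfolding s_def using d0 chi0 by (simp add: divide_right_mono)
        also have "1/chi \<le> rbar" using False chi0 by (simp add: divide_simps mult.commute)
        finally show ?thesis .
      qed
      have sc: "s*chi = 1 - d" unfolding s_def using chi0 by simp
      have "(s *\<^sub>R u, -(chi *\<^sub>R u)) \<in> S"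
        using memb[of s chi] s0 sR sc d0 assms True by auto
      moreover have "B < \<bar>zX \<sigma> (s *\<^sub>R u) (-(chi *\<^sub>R u))\<bar>"
      proof -
        have e: "zX \<sigma> (s *\<^sub>R u) (-(chi *\<^sub>R u)) = s * norm \<sigma> * sqrt (1 - chi^2) / d"
          using wit[of chi s] chi0 sc by simp
        have "s \<ge> 1/(2*chi)" unfolding s_def using d0 chi0 by (simp add: divide_simps)
        moreover have P0: "norm \<sigma> * sqrt (1 - chi^2) \<ge> 0" using sq by simp
        ultimately have "(1/(2*chi)) * (norm \<sigma> * sqrt (1 - chi^2)) \<le> s * (norm \<sigma> * sqrt (1 - chi^2))"
          by (rule mult_right_mono)
        moreover have "K = (1/(2*chi)) * (norm \<sigma> * sqrt (1 - chi^2))" unfolding K_def by simp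
        moreover have "s * norm \<sigma> * sqrt (1 - chi^2) = s * (norm \<sigma> * sqrt (1 - chi^2))"
          by (simp add: mult.assoc)
        ultimately have "s * norm \<sigma> * sqrt (1 - chi^2) \<ge> K" by linarith
        hence "s * norm \<sigma> * sqrt (1 - chi^2) / d \<ge> K / d" using d0 by (simp add: divide_right_mono)
        moreover have "K / d \<ge> \<bar>B\<bar> + 1"
          using d0 K0 by (simp add: divide_simps mult.commute) 
        ultimately have "s * norm \<sigma> * sqrt (1 - chi^2) / d \<ge> \<bar>B\<bar> + 1" by linarith
        thus ?thesis using e by linarith
      qed
      ultimately show ?thesis by force
    next
      case False2: False
      have chi1: "chi = 1" using False2 assms by simp
      have R1: "rbar \<ge> 1" using False chi1 by simp
      define X where "X = norm \<sigma>^2/(B^2+1)"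
      have X0: "X > 0" unfolding X_def by (intro divide_pos_pos) (use ns in \<open>auto intro: add_nonneg_pos\<close>)
      define d where "d = min (min (1-clo) (1/2)) X"
      have d0: "d > 0" "d \<le> 1 - clo" "d \<le> 1/2" "d \<le> X"
        unfolding d_def using assms(6) X0 by (auto simp: min_def)
      define t where "t = 1 - d"
      have t: "clo \<le> t" "t \<le> chi" "t \<noteq> 1" "0 \<le> t" using d0 chi1 unfolding t_def by auto
      have "(1 *\<^sub>R u, -(t *\<^sub>R u)) \<in> S"
        using memb[of 1 t] t R1 by auto
      moreover have "B < \<bar>zX \<sigma> (1 *\<^sub>R u) (-(t *\<^sub>R u))\<bar>"
      proof -
        define W where "W = norm \<sigma> * sqrt (1 - t^2) / d"
        have e: "zX \<sigma> (1 *\<^sub>R u) (-(t *\<^sub>R u)) = W"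
          using wit[of t 1] t unfolding W_def t_def by simp
        have tt: "1 - t^2 = d*(2-d)" unfolding t_def by (simp add: power2_eq_square algebra_simps)
        have W0: "W \<ge> 0" unfolding W_def using tt d0 by simp
        have "W^2 = norm \<sigma>^2 * (1 - t^2) / d^2" unfolding W_def using tt d0
          by (simp add: power_divide power_mult_distrib)
        also have "\<dots> = norm \<sigma>^2 * (2-d) / d" using tt d0 by (simp add: power2_eq_square)
        also have "\<dots> \<ge> norm \<sigma>^2 / d"
        proof -
          have "norm \<sigma>^2 * 1 \<le> norm \<sigma>^2 * (2-d)" using d0 by (intro mult_left_mono) auto
          thus ?thesis using d0 by (intro divide_right_mono) auto
        qed
        finally have w1: "W^2 \<ge> norm \<sigma>^2 / d" .
        have Bp: "0 < B^2 + 1" by (intro add_nonneg_pos) auto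
        have "norm \<sigma>^2 / d \<ge> B^2 + 1"
          using d0 ns Bp unfolding X_def by (simp add: divide_simps mult.commute)
        hence "\<bar>B\<bar>^2 < W^2" using w1 by simp
        hence "\<bar>B\<bar> < W" using W0 by (rule power_less_imp_less_base)
        thus ?thesis using e by simp
      qed
      ultimately show ?thesis by force
    qed
    have "(SUP rc \<in> S. ereal \<bar>zX \<sigma> (fst rc) (snd rc)\<bar>) = \<infinity>"
      unfolding top_ereal_def[symmetric] SUP_eq_top_iff
    proof (intro allI impI)
      fix x :: ereal assume "x < top"
      show "\<exists>i\<in>S. x < ereal \<bar>zX \<sigma> (fst i) (snd i)\<bar>"
      proof (cases x)
        case (real B) thus ?thesis using big[of B] by auto
      next
        case PInf thus ?thesis using \<open>x < top\<close> by simp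
      next
        case MInf thus ?thesis using big[of 0] by auto
      qed
    qed
    thus ?thesis using zb unfolding S_def by simp
  qed
qed

end
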